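(* Let $\langle D,\Gamma,\Delta\rangle$ be a planning problem with $(D,\Gamma)$ a consistent action theory and $\Delta=p_1\wedge\dots\wedge p_k$ a conjunction of fluent literals, and let $n\ge 0$. Then: (i) if $s_0a_0s_1\dots a_{n-1}s_n$ is a trajectory in $D$ with $s_0=s_0^\Gamma$ and $s_n\models\Delta$, then there exists an answer set $M$ of $\Pi_n$ such that $occ(a_i,i)\in M$ for all $i\in\{0,\dots,n-1\}$ and $s_i=s_i(M)$ for all $i\in\{0,\dots,n\}$; (ii) if $M$ is an answer set of $\Pi_n$, then there exists an integer $0\le k\le n$ and actions $a_0,\dots,a_{k-1}$ with $occ(a_i,i)\in M$ for $0\le i<k$ such that $s_0(M)a_0s_1(M)\dots a_{k-1}s_k(M)$ is a trajectory in $D$ with $s_k(M)\models\Delta$, and if $k<n$ then no action is executable in $s_k(M)$.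
   Context: Action language $\mathcal{B}$: fix finite sets $\mathbf{F}$ of fluents and $\mathbf{A}$ of actions. A fluent literal is $f$ or $\neg f$ ($f\in\mathbf{F}$); the complement $\bar l$ of $f$ is $\neg f$ and of $\neg f$ is $f$. A set of fluent literals is consistent if it contains no pair $f,\neg f$; an interpretation is a maximal consistent set. For a set $u$ of literals, $u\models p_1\wedge\dots\wedge p_k$ means $\{p_1,\dots,p_k\}\subseteq u$. A domain description $D$ is a finite set of static causal laws $\mathbf{caused}(\{p_1,\dots,p_k\},f)$ (their set is $D_C$), dynamic causal laws $\mathbf{causes}(a,f,\{p_1,\dots,p_k\})$ and executability conditions $\mathbf{executable}(a,\{p_1,\dots,p_k\})$, with $a\in\mathbf{A}$ and $f,p_i$ fluent literals; $\Gamma$ is a set of propositions $\mathbf{initially}(f)$. A consistent set $u$ is closed under $D_C$ if for every $\mathbf{caused}(P,f)\in D_C$ with $P\subseteq u$, $f\in u$; $Cl_{D_C}(u)$ is the least consistent superset of $u$ closed under $D_C$ (undefined if none). A state is an interpretation closed under $D_C$. Action $a$ is executable in state $s$ if some $\mathbf{executable}(a,P)\in D$ has $P\subseteq s$. $E(a,s)=\{f\mid \mathbf{causes}(a,f,P)\in D,\ P\subseteq s\}$. $\Phi(a,s)=\{s'\mid s'\text{ a state},\ s'=Cl_{D_C}(E(a,s)\cup(s\cap s'))\}$ if $a$ is executable in $s$, and $\Phi(a,s)=\emptyset$ otherwise. A trajectory is a sequence $s_0a_0s_1\dots a_{m-1}s_m$ of states $s_i$ and actions $a_i$ with $s_{i+1}\in\Phi(a_i,s_i)$.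 $D$ is consistent if $\Phi(a,s)\ne\emptyset$ whenever $a$ is executable in state $s$; $(D,\Gamma)$ is consistent if $D$ is consistent and $s_0^\Gamma:=\{f\mid\mathbf{initially}(f)\in\Gamma\}$ is a state of $D$. Answer sets: a ground normal program consists of rules $h\leftarrow b_1,\dots,b_m,\mathit{not}\,c_1,\dots,\mathit{not}\,c_r$ and constraints $\bot\leftarrow b_1,\dots,b_m,\mathit{not}\,c_1,\dots,\mathit{not}\,c_r$. For a set $S$ of atoms, the reduct $\Pi^S$ deletes every rule/constraint containing $\mathit{not}\,c$ with $c\in S$ and deletes all $\mathit{not}$-literals from the rest; $S$ is an answer set of $\Pi$ if $S$ is the least set of atoms closed under the non-constraint rules of $\Pi^S$ and no constraint of $\Pi^S$ has its whole body contained in $S$. The program $\pi$ (ground; $t$ ranges over $\{0,\dots,n\}$ unless stated): (1) $holds(l,0)\leftarrow$ for each $\mathbf{initially}(l)\in\Gamma$; (2) $possible(a,t)\leftarrow holds(p_1,t),\dots,holds(p_k,t)$ for each $\mathbf{executable}(a,\{p_1,\dots,p_k\})\in D$; (3) for $t\in\{0,\dots,n-1\}$, $holds(f,t+1)\leftarrow occ(a,t),possible(a,t),holds(p_1,t),\dots,holds(p_k,t)$ for each $\mathbf{causes}(a,f,\{p_1,\dots,p_k\})\in D$; (4) $holds(f,t)\leftarrow holds(p_1,t),\dots,holds(p_k,t)$ for each $\mathbf{caused}(\{p_1,\dots,p_k\},f)\in D$; (5) $occ(a,t)\leftarrow possible(a,t),\mathit{not}\,nocc(a,t)$ for each action $a$;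 (6) $nocc(a,t)\leftarrow occ(b,t)$ for each pair of distinct actions $a\ne b$; (7) for $t\in\{0,\dots,n-1\}$, $holds(l,t+1)\leftarrow holds(l,t),\mathit{not}\,holds(\bar l,t+1)$ for each fluent literal $l$; (8) $\bot\leftarrow holds(f,t),holds(\neg f,t)$ for each fluent $f$. $\Pi_n$ is $\pi$ together with the rule $goal\leftarrow holds(p_1,n),\dots,holds(p_k,n)$ (where $\Delta=p_1\wedge\dots\wedge p_k$) and the constraint $\bot\leftarrow\mathit{not}\,goal$. For a set $M$ of atoms, $s_i(M)=\{l\mid l\text{ a fluent literal},\ holds(l,i)\in M\}$. *)

theory Defs
  imports Main
begin

datatype 'f lit = Pos 'f | Neg 'f

fun comp :: "'f lit \<Rightarrow> 'f lit" where
  "comp (Pos f) = Neg f"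
| "comp (Neg f) = Pos f"

(* A domain description: static causal laws caused(P,f), dynamic causal laws
   causes(a,f,P), executability conditions executable(a,P). *)
record ('f, 'a) domain =
  stat :: "('f lit set \<times> 'f lit) set"
  dyn  :: "('a \<times> 'f lit \<times> 'f lit set) set"
  exe  :: "('a \<times> 'f lit set) set"

definition finite_domain :: "('f, 'a) domain \<Rightarrow> bool" where
  "finite_domain D \<longleftrightarrow> finite (stat D) \<and> finite (dyn D) \<and> finite (exe D)
     \<and> (\<forall>(P,f)\<in>stat D. finite P) \<and> (\<forall>(a,f,P)\<in>dyn D. finite P) \<and> (\<forall>(a,P)\<in>exe D. finite P)"

definition consistent_lits :: "'f lit set \<Rightarrow> bool" where
  "consistent_lits u \<longleftrightarrow> (\<forall>f. \<not> (Pos f \<in> u \<and> Neg f \<in> u))"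

definition is_interpretation :: "'f lit set \<Rightarrow> bool" where
  "is_interpretation u \<longleftrightarrow> consistent_lits u \<and>
     (\<forall>v. consistent_lits v \<and> u \<subseteq> v \<longrightarrow> v = u)"

definition closed_under :: "('f lit set \<times> 'f lit) set \<Rightarrow> 'f lit set \<Rightarrow> bool" where
  "closed_under DC u \<longleftrightarrow> consistent_lits u \<and> (\<forall>(P,f)\<in>DC. P \<subseteq> u \<longrightarrow> f \<in> u)"

definition is_Cl :: "('f lit set \<times> 'f lit) set \<Rightarrow> 'f lit set \<Rightarrow> 'f lit set \<Rightarrow> bool" where
  "is_Cl DC u v \<longleftrightarrow> u \<subseteq> v \<and> closed_under DC v \<and>
     (\<forall>w. u \<subseteq> w \<and> closed_under DC w \<longrightarrow> v \<subseteq> w)"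

definition is_state :: "('f, 'a) domain \<Rightarrow> 'f lit set \<Rightarrow> bool" where
  "is_state D s \<longleftrightarrow> is_interpretation s \<and> closed_under (stat D) s"

definition executable_in :: "('f, 'a) domain \<Rightarrow> 'a \<Rightarrow> 'f lit set \<Rightarrow> bool" where
  "executable_in D a s \<longleftrightarrow> (\<exists>P. (a, P) \<in> exe D \<and> P \<subseteq> s)"

definition eff :: "('f, 'a) domain \<Rightarrow> 'a \<Rightarrow> 'f lit set \<Rightarrow> 'f lit set" where
  "eff D a s = {f. \<exists>P. (a, f, P) \<in> dyn D \<and> P \<subseteq> s}"

definition Phi :: "('f, 'a) domain \<Rightarrow> 'a \<Rightarrow> 'f lit set \<Rightarrow> 'f lit set set" where
  "Phi D a s = (if executable_in D a s
     then {s'. is_state D s' \<and> is_Cl (stat D) (eff D a s \<union> (s \<inter> s')) s'}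
     else {})"

definition trajectory :: "('f, 'a) domain \<Rightarrow> (nat \<Rightarrow> 'f lit set) \<Rightarrow> (nat \<Rightarrow> 'a) \<Rightarrow> nat \<Rightarrow> bool" where
  "trajectory D s a m \<longleftrightarrow> (\<forall>i\<le>m. is_state D (s i)) \<and> (\<forall>i<m. s (Suc i) \<in> Phi D (a i) (s i))"

definition consistent_domain :: "('f, 'a) domain \<Rightarrow> bool" where
  "consistent_domain D \<longleftrightarrow>
     (\<forall>a s. is_state D s \<and> executable_in D a s \<longrightarrow> Phi D a s \<noteq> {})"

(* Gamma is represented by the set of literals l with initially(l) in Gamma, i.e. s_0^Gamma *)
definition consistent_theory :: "('f, 'a) domain \<Rightarrow> 'f lit set \<Rightarrow> bool" where
  "consistent_theory D \<Gamma> \<longleftrightarrow> consistent_domain D \<and> is_state D \<Gamma>"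

datatype ('f, 'a) atom =
    Holds "'f lit" nat | Possible 'a nat | Occ 'a nat | Nocc 'a nat | Goal

(* a ground rule: (head, positive body, negated body); head None = constraint (bottom) *)
type_synonym 'x rule = "'x option \<times> 'x set \<times> 'x set"

definition reduct :: "'x rule set \<Rightarrow> 'x set \<Rightarrow> ('x option \<times> 'x set) set" where
  "reduct \<Pi> S = {(h, B). \<exists>N. (h, B, N) \<in> \<Pi> \<and> N \<inter> S = {}}"

definition rules_closed :: "('x option \<times> 'x set) set \<Rightarrow> 'x set \<Rightarrow> bool" where
  "rules_closed R X \<longleftrightarrow> (\<forall>h B. (Some h, B) \<in> R \<and> B \<subseteq> X \<longrightarrow> h \<in> X)"

definition answer_set :: "'x rule set \<Rightarrow> 'x set \<Rightarrow> bool" where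
  "answer_set \<Pi> S \<longleftrightarrow>
     rules_closed (reduct \<Pi> S) S \<and>
     (\<forall>X. rules_closed (reduct \<Pi> S) X \<longrightarrow> S \<subseteq> X) \<and>
     (\<forall>B. (None, B) \<in> reduct \<Pi> S \<longrightarrow> \<not> B \<subseteq> S)"

definition holds_at :: "'f lit set \<Rightarrow> nat \<Rightarrow> ('f, 'a) atom set" where
  "holds_at P t = (\<lambda>p. Holds p t) ` P"

definition prog_pi :: "('f, 'a) domain \<Rightarrow> 'f lit set \<Rightarrow> nat \<Rightarrow> ('f, 'a) atom rule set" where
  "prog_pi D \<Gamma> n =
     {(Some (Holds l 0), {}, {}) | l. l \<in> \<Gamma>}
   \<union> {(Some (Possible a t), holds_at P t, {}) | a P t. (a, P) \<in> exe D \<and> t \<le> n}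
   \<union> {(Some (Holds f (Suc t)), {Occ a t, Possible a t} \<union> holds_at P t, {}) | a f P t.
        (a, f, P) \<in> dyn D \<and> t < n}
   \<union> {(Some (Holds f t), holds_at P t, {}) | P f t. (P, f) \<in> stat D \<and> t \<le> n}
   \<union> {(Some (Occ a t), {Possible a t}, {Nocc a t}) | a t. t \<le> n}
   \<union> {(Some (Nocc a t), {Occ b t}, {}) | a b t. a \<noteq> b \<and> t \<le> n}
   \<union> {(Some (Holds l (Suc t)), {Holds l t}, {Holds (comp l) (Suc t)}) | l t. t < n}
   \<union> {(None, {Holds (Pos f) t, Holds (Neg f) t}, {}) | f t. t \<le> n}"

definition prog_Pi :: "('f, 'a) domain \<Rightarrow> 'f lit set \<Rightarrow> 'f lit set \<Rightarrow> nat \<Rightarrow> ('f, 'a) atom rule set" where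
  "prog_Pi D \<Gamma> \<Delta> n = prog_pi D \<Gamma> n
     \<union> {(Some Goal, holds_at \<Delta> n, {}), (None, {}, {Goal})}"

definition s_of :: "('f, 'a) atom set \<Rightarrow> nat \<Rightarrow> 'f lit set" where
  "s_of M i = {l. Holds l i \<in> M}"

end

theory Submission imports Defs begin

lemma as_closed:
  assumes "answer_set \<Pi> M" "(Some h, B, N) \<in> \<Pi>" "N \<inter> M = {}" "B \<subseteq> M"
  shows "h \<in> M"
  using assms unfolding answer_set_def rules_closed_def reduct_def by blast

lemma as_min:
  assumes "answer_set \<Pi> M"
    and "\<And>h B N. (Some h,B,N) \<in> \<Pi> \<Longrightarrow> N \<inter> M = {} \<Longrightarrow> B \<subseteq> M \<Longrightarrow> B \<subseteq> Y \<Longrightarrow> h \<in> M \<Longrightarrow> h \<in> Y"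
  shows "M \<subseteq> Y"
proof -
  have "rules_closed (reduct \<Pi> M) (M \<inter> Y)"
    unfolding rules_closed_def
  proof (intro allI impI)
    fix h B assume a: "(Some h, B) \<in> reduct \<Pi> M \<and> B \<subseteq> M \<inter> Y"
    then obtain N where *: "(Some h, B, N) \<in> \<Pi>" "N \<inter> M = {}" "B \<subseteq> M" "B \<subseteq> Y"
      unfolding reduct_def by blast
    then have "h \<in> M" using as_closed[OF assms(1)] by blast
    then show "h \<in> M \<inter> Y" using assms(2)[OF *] by blast
  qed
  then show ?thesis using assms(1) unfolding answer_set_def by blast
qed

lemma as_constr:
  assumes "answer_set \<Pi> M" "(None, B, N) \<in> \<Pi>" "N \<inter> M = {}"
  shows "\<not> B \<subseteq> M"
  using assms unfolding answer_set_def reduct_def by blast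

lemma holds_at_sub: "holds_at P t \<subseteq> M \<longleftrightarrow> P \<subseteq> s_of M t"
  unfolding holds_at_def s_of_def by auto

lemma comp_comp[simp]: "comp (comp l) = l" by (cases l) auto
lemma comp_neq[simp]: "comp l \<noteq> l" by (cases l) auto

lemma cons_comp: "consistent_lits u \<Longrightarrow> l \<in> u \<Longrightarrow> comp l \<notin> u"
  unfolding consistent_lits_def by (cases l) auto

lemma interp_comp: "is_interpretation u \<Longrightarrow> l \<notin> u \<Longrightarrow> comp l \<in> u"
proof (rule ccontr)
  assume a: "is_interpretation u" "l \<notin> u" "comp l \<notin> u"
  have "consistent_lits (insert l u)" using a unfolding is_interpretation_def consistent_lits_def
    by (cases l) auto
  then have "insert l u = u" using a(1) unfolding is_interpretation_def by blast
  then show False using a(2) by blast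
qed

lemma interp_intro:
  assumes c: "consistent_lits u" and k: "\<And>l. l \<in> u \<or> comp l \<in> u" shows "is_interpretation u"
  unfolding is_interpretation_def
proof (intro conjI allI impI)
  fix v assume a0: "consistent_lits v \<and> u \<subseteq> v"
  note a = c k a0
  show "v = u"
  proof
    show "v \<subseteq> u"
    proof
      fix x assume "x \<in> v"
      show "x \<in> u"
      proof (rule ccontr)
        assume "x \<notin> u"
        then have "comp x \<in> v" using a by blast
        then show False using cons_comp[of v x] a \<open>x \<in> v\<close> by blast
      qed
    qed
  qed (use a in blast)
qed (rule c)

lemma Pi_cases:
  assumes "(Some h, B, N) \<in> prog_Pi D \<Gamma> \<Delta> n"
  obtains (init) l where "h = Holds l 0" "B = {}" "N = {}" "l \<in> \<Gamma>"
  | (poss) a P t where "h = Possible a t" "B = holds_at P t" "N = {}" "(a,P) \<in> exe D" "t \<le> n"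
  | (dyn) a f P t where "h = Holds f (Suc t)" "B = {Occ a t, Possible a t} \<union> holds_at P t" "N = {}" "(a,f,P) \<in> dyn D" "t < n"
  | (stat) P f t where "h = Holds f t" "B = holds_at P t" "N={}" "(P,f) \<in> stat D" "t \<le> n"
  | (occ) a t where "h = Occ a t" "B = {Possible a t}" "N = {Nocc a t}" "t \<le> n"
  | (nocc) a b t where "h = Nocc a t" "B = {Occ b t}" "N = {}" "a \<noteq> b" "t \<le> n"
  | (inert) l t where "h = Holds l (Suc t)" "B = {Holds l t}" "N = {Holds (comp l) (Suc t)}" "t < n"
  | (goal) "h = Goal" "B = holds_at \<Delta> n" "N = {}"
  using assms unfolding prog_Pi_def prog_pi_def
  apply (elim UnE insertE)
  apply (auto intro: that)
  done


context fixes D :: "('f, 'a) domain" and \<Gamma> \<Delta> :: "'f lit set" and n :: nat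
begin
lemma Pi_init: "l \<in> \<Gamma> \<Longrightarrow> (Some (Holds l 0), {}, {}) \<in> prog_Pi D \<Gamma> \<Delta> n"
  unfolding prog_Pi_def prog_pi_def apply (rule UnI1, rule UnI1, rule UnI1, rule UnI1, rule UnI1, rule UnI1, rule UnI1, rule UnI1) by blast
lemma Pi_poss: "(a,P) \<in> exe D \<Longrightarrow> t \<le> n \<Longrightarrow> (Some (Possible a t), holds_at P t, {}) \<in> prog_Pi D \<Gamma> \<Delta> n"
  unfolding prog_Pi_def prog_pi_def apply (rule UnI1, rule UnI1, rule UnI1, rule UnI1, rule UnI1, rule UnI1, rule UnI1, rule UnI2) by blast
lemma Pi_dyn: "(a,f,P) \<in> dyn D \<Longrightarrow> t < n \<Longrightarrow> (Some (Holds f (Suc t)), {Occ a t, Possible a t} \<union> holds_at P t, {}) \<in> prog_Pi D \<Gamma> \<Delta> n"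
  unfolding prog_Pi_def prog_pi_def apply (rule UnI1, rule UnI1, rule UnI1, rule UnI1, rule UnI1, rule UnI1, rule UnI2) by blast
lemma Pi_stat: "(P,f) \<in> stat D \<Longrightarrow> t \<le> n \<Longrightarrow> (Some (Holds f t), holds_at P t, {}) \<in> prog_Pi D \<Gamma> \<Delta> n"
  unfolding prog_Pi_def prog_pi_def apply (rule UnI1, rule UnI1, rule UnI1, rule UnI1, rule UnI1, rule UnI2) by blast
lemma Pi_occ: "t \<le> n \<Longrightarrow> (Some (Occ a t), {Possible a t}, {Nocc a t}) \<in> prog_Pi D \<Gamma> \<Delta> n"
  unfolding prog_Pi_def prog_pi_def apply (rule UnI1, rule UnI1, rule UnI1, rule UnI1, rule UnI2) by blast
lemma Pi_nocc: "a \<noteq> b \<Longrightarrow> t \<le> n \<Longrightarrow> (Some (Nocc a t), {Occ b t}, {}) \<in> prog_Pi D \<Gamma> \<Delta> n"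
  unfolding prog_Pi_def prog_pi_def apply (rule UnI1, rule UnI1, rule UnI1, rule UnI2) by blast
lemma Pi_inert: "t < n \<Longrightarrow> (Some (Holds l (Suc t)), {Holds l t}, {Holds (comp l) (Suc t)}) \<in> prog_Pi D \<Gamma> \<Delta> n"
  unfolding prog_Pi_def prog_pi_def apply (rule UnI1, rule UnI1, rule UnI2) by blast
lemma Pi_cons: "t \<le> n \<Longrightarrow> (None, {Holds (Pos f) t, Holds (Neg f) t}, {}) \<in> prog_Pi D \<Gamma> \<Delta> n"
  unfolding prog_Pi_def prog_pi_def apply (rule UnI1, rule UnI2) by blast
lemma Pi_goal: "(Some Goal, holds_at \<Delta> n, {}) \<in> prog_Pi D \<Gamma> \<Delta> n"
  unfolding prog_Pi_def prog_pi_def by blast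
lemma Pi_goalc: "(None, {}, {Goal}) \<in> prog_Pi D \<Gamma> \<Delta> n"
  unfolding prog_Pi_def prog_pi_def by blast
end

context
  fixes D :: "('f, 'a) domain" and \<Gamma> \<Delta> :: "'f lit set" and n :: nat and M
  assumes AS: "answer_set (prog_Pi D \<Gamma> \<Delta> n) M"
begin

lemma supp:
  "M \<subseteq> {x. case x of Holds l t \<Rightarrow> t \<le> n
     | Possible a t \<Rightarrow> t \<le> n \<and> executable_in D a (s_of M t)
     | Occ a t \<Rightarrow> Possible a t \<in> M \<and> Nocc a t \<notin> M
     | Nocc a t \<Rightarrow> (\<exists>b. b \<noteq> a \<and> Occ b t \<in> M)
     | Goal \<Rightarrow> \<Delta> \<subseteq> s_of M n}"
proof (rule as_min[OF AS])
  fix h B N assume "(Some h, B, N) \<in> prog_Pi D \<Gamma> \<Delta> n" "N \<inter> M = {}" "B \<subseteq> M"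
  then show "h \<in> {x. case x of Holds l t \<Rightarrow> t \<le> n
     | Possible a t \<Rightarrow> t \<le> n \<and> executable_in D a (s_of M t)
     | Occ a t \<Rightarrow> Possible a t \<in> M \<and> Nocc a t \<notin> M
     | Nocc a t \<Rightarrow> (\<exists>b. b \<noteq> a \<and> Occ b t \<in> M)
     | Goal \<Rightarrow> \<Delta> \<subseteq> s_of M n}"
    by (elim Pi_cases; force simp: holds_at_sub executable_in_def)
qed

lemma holds_le: "Holds l t \<in> M \<Longrightarrow> t \<le> n" using supp by force
lemma poss_iff: "Possible a t \<in> M \<longleftrightarrow> t \<le> n \<and> executable_in D a (s_of M t)"
proof
  assume "Possible a t \<in> M" then show "t \<le> n \<and> executable_in D a (s_of M t)" using supp by force
next
  assume "t \<le> n \<and> executable_in D a (s_of M t)"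
  then obtain P where "(a,P) \<in> exe D" "P \<subseteq> s_of M t" "t \<le> n" unfolding executable_in_def by blast
  then show "Possible a t \<in> M" using as_closed[OF AS Pi_poss] holds_at_sub by blast
qed
lemma occ_poss: "Occ a t \<in> M \<Longrightarrow> Possible a t \<in> M" using supp by force
lemma occ_nocc: "Occ a t \<in> M \<Longrightarrow> Nocc a t \<notin> M" using supp by force
lemma nocc_occ: "Nocc a t \<in> M \<Longrightarrow> \<exists>b. b \<noteq> a \<and> Occ b t \<in> M" using supp by force
lemma occ_unique: assumes "Occ a t \<in> M" "Occ b t \<in> M" shows "a = b"
proof (rule ccontr)
  assume "a \<noteq> b"
  have "t \<le> n" using assms(1) occ_poss poss_iff by blast
  then have "Nocc a t \<in> M" using as_closed[OF AS Pi_nocc[OF \<open>a \<noteq> b\<close>]] assms by blast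
  then show False using occ_nocc assms(1) by blast
qed
lemma poss_occ: assumes "Possible a t \<in> M" shows "\<exists>b. Occ b t \<in> M"
proof (rule ccontr)
  assume no: "\<nexists>b. Occ b t \<in> M"
  then have "Nocc a t \<notin> M" using nocc_occ by blast
  moreover have "t \<le> n" using assms poss_iff by blast
  ultimately have "Occ a t \<in> M" using as_closed[OF AS Pi_occ] assms by blast
  then show False using no by blast
qed
lemma goal_in: "Goal \<in> M"
proof (rule ccontr)
  assume "Goal \<notin> M"
  then show False using as_constr[OF AS Pi_goalc] by blast
qed
lemma goal_sub: "\<Delta> \<subseteq> s_of M n" using supp goal_in by force
lemma cons_M: "t \<le> n \<Longrightarrow> consistent_lits (s_of M t)"
  unfolding consistent_lits_def s_of_def using as_constr[OF AS Pi_cons] by blast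
lemma closed_M: "t \<le> n \<Longrightarrow> closed_under (stat D) (s_of M t)"
  unfolding closed_under_def using cons_M as_closed[OF AS Pi_stat] holds_at_sub
  unfolding s_of_def by blast

lemma s0: assumes "is_state D \<Gamma>" shows "s_of M 0 = \<Gamma>"
proof
  show "\<Gamma> \<subseteq> s_of M 0" unfolding s_of_def using as_closed[OF AS Pi_init] by blast
  have "M \<subseteq> {x. \<forall>l. x = Holds l 0 \<longrightarrow> l \<in> \<Gamma>}"
  proof (rule as_min[OF AS])
    fix h B N assume h: "(Some h, B, N) \<in> prog_Pi D \<Gamma> \<Delta> n" "N \<inter> M = {}" "B \<subseteq> M"
      "B \<subseteq> {x. \<forall>l. x = Holds l 0 \<longrightarrow> l \<in> \<Gamma>}"
    from h(1) show "h \<in> {x. \<forall>l. x = Holds l 0 \<longrightarrow> l \<in> \<Gamma>}"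
    proof (cases rule: Pi_cases)
      case (stat P f t)
      then show ?thesis using h(4) assms unfolding is_state_def closed_under_def holds_at_def
        by fastforce
    qed auto
  qed
  then show "s_of M 0 \<subseteq> \<Gamma>" unfolding s_of_def by blast
qed

lemma complete_M: assumes "is_state D \<Gamma>" shows "t \<le> n \<Longrightarrow> l \<in> s_of M t \<or> comp l \<in> s_of M t"
proof (induction t arbitrary: l)
  case 0
  then show ?case using s0[OF assms] interp_comp assms unfolding is_state_def by blast
next
  case (Suc t)
  show ?case
  proof (rule ccontr)
    assume nb: "\<not> (l \<in> s_of M (Suc t) \<or> comp l \<in> s_of M (Suc t))"
    obtain m where m: "m = l \<or> m = comp l" "m \<in> s_of M t" using Suc by fastforce
    have "comp m \<notin> s_of M (Suc t)" using nb m(1) by auto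
    then have "m \<in> s_of M (Suc t)"
      using as_closed[OF AS Pi_inert[where l=m and t=t]] Suc.prems m(2) unfolding s_of_def by auto
    then show False using nb m(1) by auto
  qed
qed

lemma state_M: assumes "is_state D \<Gamma>" "t \<le> n" shows "is_state D (s_of M t)"
  unfolding is_state_def using interp_intro[OF cons_M[OF assms(2)]] complete_M[OF assms] closed_M[OF assms(2)]
  by blast

lemma trans_M: assumes st: "is_state D \<Gamma>" and t: "t < n" and oc: "Occ a t \<in> M"
  shows "s_of M (Suc t) \<in> Phi D a (s_of M t)"
proof -
  let ?s = "s_of M t" and ?s' = "s_of M (Suc t)"
  have ex: "executable_in D a ?s" using oc occ_poss poss_iff by blast
  have E: "eff D a ?s \<subseteq> ?s'"
  proof
    fix f assume "f \<in> eff D a ?s"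
    then obtain P where "(a,f,P) \<in> dyn D" "P \<subseteq> ?s" unfolding eff_def by blast
    then have "holds_at P t \<subseteq> M" using holds_at_sub by blast
    then show "f \<in> ?s'" using as_closed[OF AS Pi_dyn[where a=a and f=f and P=P and t=t]] t oc occ_poss \<open>(a,f,P) \<in> dyn D\<close>
      unfolding s_of_def by auto
  qed
  have minim: "?s' \<subseteq> w" if w: "eff D a ?s \<union> (?s \<inter> ?s') \<subseteq> w" "closed_under (stat D) w" for w
  proof -
    have "M \<subseteq> {x. \<forall>l. x = Holds l (Suc t) \<longrightarrow> l \<in> w}"
    proof (rule as_min[OF AS])
      fix h B N assume h: "(Some h, B, N) \<in> prog_Pi D \<Gamma> \<Delta> n" "N \<inter> M = {}" "B \<subseteq> M"
        "B \<subseteq> {x. \<forall>l. x = Holds l (Suc t) \<longrightarrow> l \<in> w}" "h \<in> M"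
      from h(1) show "h \<in> {x. \<forall>l. x = Holds l (Suc t) \<longrightarrow> l \<in> w}"
      proof (cases rule: Pi_cases)
        case (dyn b f P t')
        show ?thesis
        proof (cases "t' = t")
          case True
          then have "Occ b t \<in> M" "holds_at P t \<subseteq> M" using dyn h(3) by auto
          then have "Occ b t \<in> M" "P \<subseteq> ?s" using holds_at_sub[of P t M] by auto
          then have "b = a" using occ_unique oc by blast
          then have "f \<in> eff D a ?s" using dyn \<open>P \<subseteq> ?s\<close> unfolding eff_def by blast
          then show ?thesis using dyn w by auto
        qed (use dyn in auto)
      next
        case (stat P f t')
        show ?thesis
        proof (cases "t' = Suc t")
          case True
          then have "P \<subseteq> w" using stat h(4) unfolding holds_at_def by auto
          then show ?thesis using stat w(2) unfolding closed_under_def by auto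
        qed (use stat in auto)
      next
        case (inert l t')
        show ?thesis
        proof (cases "t' = t")
          case True
          then have "l \<in> ?s" "l \<in> ?s'" using inert h(3,5) unfolding s_of_def by auto
          then show ?thesis using inert w(1) by auto
        qed (use inert in auto)
      qed auto
    qed
    then show ?thesis unfolding s_of_def by blast
  qed
  have "is_state D ?s'" using state_M st t by simp
  moreover have "is_Cl (stat D) (eff D a ?s \<union> (?s \<inter> ?s')) ?s'"
    unfolding is_Cl_def using E minim closed_M t by auto
  ultimately show ?thesis unfolding Phi_def using ex by simp
qed

lemma still_M: assumes st: "is_state D \<Gamma>" and t: "t < n" and ne: "\<forall>b. \<not> executable_in D b (s_of M t)"
  shows "s_of M (Suc t) = s_of M t"
proof -
  let ?s = "s_of M t" and ?s' = "s_of M (Suc t)"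
  have "M \<subseteq> {x. \<forall>l. x = Holds l (Suc t) \<longrightarrow> l \<in> ?s}"
  proof (rule as_min[OF AS])
    fix h B N assume h: "(Some h, B, N) \<in> prog_Pi D \<Gamma> \<Delta> n" "N \<inter> M = {}" "B \<subseteq> M"
      "B \<subseteq> {x. \<forall>l. x = Holds l (Suc t) \<longrightarrow> l \<in> ?s}" "h \<in> M"
    from h(1) show "h \<in> {x. \<forall>l. x = Holds l (Suc t) \<longrightarrow> l \<in> ?s}"
    proof (cases rule: Pi_cases)
      case (dyn b f P t')
      show ?thesis
      proof (cases "t' = t")
        case True
        then have "Possible b t \<in> M" using dyn h(3) by auto
        then show ?thesis using ne poss_iff by blast
      qed (use dyn in auto)
    next
      case (stat P f t')
      show ?thesis
      proof (cases "t' = Suc t")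
        case True
        then have "P \<subseteq> ?s" using stat h(4) unfolding holds_at_def by auto
        then show ?thesis using stat closed_M[of t] t unfolding closed_under_def by auto
      qed (use stat in auto)
    next
      case (inert l t')
      then show ?thesis using h(3) unfolding s_of_def by auto
    qed auto
  qed
  then have sub: "?s' \<subseteq> ?s" unfolding s_of_def by blast
  show ?thesis
  proof
    show "?s \<subseteq> ?s'"
    proof
      fix l assume "l \<in> ?s"
      then have "comp l \<notin> ?s" using cons_comp[OF cons_M[of t]] t by simp
      then have "comp l \<notin> ?s'" using sub by blast
      then show "l \<in> ?s'" using complete_M[OF st, of "Suc t" "comp l"] t by simp
    qed
  qed (rule sub)
qed

end


lemma Pi_cases_None:
  assumes "(None, B, N) \<in> prog_Pi D \<Gamma> \<Delta> n"
  shows "(\<exists>f t. B = {Holds (Pos f) t, Holds (Neg f) t} \<and> t \<le> n) \<or> (B = {} \<and> N = {Goal})"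
  using assms unfolding prog_Pi_def prog_pi_def
  apply (elim UnE insertE)
  apply auto
  done

context
  fixes D :: "('f, 'a) domain" and \<Gamma> \<Delta> :: "'f lit set" and n :: nat and M
  assumes AS: "answer_set (prog_Pi D \<Gamma> \<Delta> n) M" and st: "is_state D \<Gamma>"
begin

lemma persist: assumes "t \<le> n" "\<forall>b. \<not> executable_in D b (s_of M t)"
  shows "s_of M n = s_of M t"
proof -
  have "\<forall>j. t + j \<le> n \<longrightarrow> s_of M (t + j) = s_of M t"
  proof
    fix j show "t + j \<le> n \<longrightarrow> s_of M (t + j) = s_of M t"
    proof (induction j)
      case (Suc j)
      show ?case
      proof
        assume le: "t + Suc j \<le> n"
        then have eq: "s_of M (t + j) = s_of M t" using Suc by simp
        then have "s_of M (Suc (t + j)) = s_of M (t + j)"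
          using still_M[OF AS st, of "t + j"] le assms(2) by simp
        then show "s_of M (t + Suc j) = s_of M t" using eq by simp
      qed
    qed simp
  qed
  moreover obtain j where "n = t + j" using assms(1) le_iff_add by blast
  ultimately show ?thesis by simp
qed

lemma part2:
  "\<exists>k\<le>n. \<exists>a. (\<forall>i<k. Occ (a i) i \<in> M)
                 \<and> trajectory D (s_of M) a k \<and> \<Delta> \<subseteq> s_of M k
                 \<and> (k < n \<longrightarrow> (\<forall>b. \<not> executable_in D b (s_of M k)))"
proof -
  define Q where "Q t \<longleftrightarrow> t < n \<and> (\<forall>b. \<not> executable_in D b (s_of M t))" for t
  define k where "k = (if \<exists>t. Q t then (LEAST t. Q t) else n)"
  define a where "a i = (SOME b. Occ b i \<in> M)" for i
  have kn: "k \<le> n"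
  proof (cases "\<exists>t. Q t")
    case True
    then have "Q (LEAST t. Q t)" by (rule LeastI_ex)
    then show ?thesis unfolding k_def Q_def using True by simp
  qed (simp add: k_def)
  have notQ: "\<not> Q i" if "i < k" for i
  proof
    assume "Q i"
    then have "(LEAST t. Q t) \<le> i" by (rule Least_le)
    moreover have "Ex Q" using \<open>Q i\<close> by blast
    ultimately show False using that unfolding k_def by simp
  qed
  have occ: "Occ (a i) i \<in> M" if ik: "i < k" for i
  proof -
    have "i < n" using ik kn by simp
    then obtain b where "executable_in D b (s_of M i)" using notQ[OF ik] unfolding Q_def by blast
    then have "Possible b i \<in> M" using poss_iff[OF AS] \<open>i < n\<close> by simp
    then obtain c where "Occ c i \<in> M" using poss_occ[OF AS] by blast
    then show ?thesis unfolding a_def by (rule someI)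
  qed
  have traj: "trajectory D (s_of M) a k"
    unfolding trajectory_def using state_M[OF AS st] trans_M[OF AS st] occ kn by auto
  have fin: "\<Delta> \<subseteq> s_of M k \<and> (k < n \<longrightarrow> (\<forall>b. \<not> executable_in D b (s_of M k)))"
  proof (cases "\<exists>t. Q t")
    case True
    then have "Q k" unfolding k_def using LeastI_ex by auto
    then have "s_of M n = s_of M k" using persist unfolding Q_def by simp
    then show ?thesis using goal_sub[OF AS] \<open>Q k\<close> unfolding Q_def by simp
  next
    case False
    then have "k = n" unfolding k_def by (simp only: if_False)
    then show ?thesis using goal_sub[OF AS] by simp
  qed
  show ?thesis using kn occ traj fin by blast
qed

end


definition occf :: "('f, 'a) domain \<Rightarrow> (nat \<Rightarrow> 'f lit set) \<Rightarrow> (nat \<Rightarrow> 'a) \<Rightarrow> nat \<Rightarrow> nat \<Rightarrow> 'a option" where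
  "occf D s a n t = (if t < n then Some (a t)
     else if t = n \<and> (\<exists>b. executable_in D b (s n)) then Some (SOME b. executable_in D b (s n)) else None)"

definition Mof :: "('f, 'a) domain \<Rightarrow> (nat \<Rightarrow> 'f lit set) \<Rightarrow> (nat \<Rightarrow> 'a) \<Rightarrow> nat \<Rightarrow> ('f, 'a) atom set" where
  "Mof D s a n = {Holds l t | l t. t \<le> n \<and> l \<in> s t}
     \<union> {Possible b t | b t. t \<le> n \<and> executable_in D b (s t)}
     \<union> {Occ b t | b t. occf D s a n t = Some b}
     \<union> {Nocc b t | b t. \<exists>c. occf D s a n t = Some c \<and> c \<noteq> b}
     \<union> {Goal}"

context
  fixes D :: "('f, 'a) domain" and \<Gamma> \<Delta> :: "'f lit set" and n :: nat and s and a
  assumes tr: "trajectory D s a n" and s0: "s 0 = \<Gamma>" and gl: "\<Delta> \<subseteq> s n"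
begin

lemma M_holds[simp]: "Holds l t \<in> Mof D s a n \<longleftrightarrow> t \<le> n \<and> l \<in> s t"
  unfolding Mof_def by auto
lemma M_poss[simp]: "Possible b t \<in> Mof D s a n \<longleftrightarrow> t \<le> n \<and> executable_in D b (s t)"
  unfolding Mof_def by auto
lemma M_occ[simp]: "Occ b t \<in> Mof D s a n \<longleftrightarrow> occf D s a n t = Some b"
  unfolding Mof_def by auto
lemma M_nocc[simp]: "Nocc b t \<in> Mof D s a n \<longleftrightarrow> (\<exists>c. occf D s a n t = Some c \<and> c \<noteq> b)"
  unfolding Mof_def by auto
lemma M_goal[simp]: "Goal \<in> Mof D s a n"
  unfolding Mof_def by auto

lemma M_holds_at[simp]: "holds_at P t \<subseteq> Mof D s a n \<longleftrightarrow> (P = {} \<or> t \<le> n) \<and> P \<subseteq> s t"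
  unfolding holds_at_def by auto

lemma stt: "i \<le> n \<Longrightarrow> is_state D (s i)" using tr unfolding trajectory_def by auto
lemma phi: "i < n \<Longrightarrow> s (Suc i) \<in> Phi D (a i) (s i)" using tr unfolding trajectory_def by auto
lemma phi_ex: assumes "i < n" shows "executable_in D (a i) (s i)" using phi[OF assms] unfolding Phi_def by (auto split: if_splits)
lemma phi_cl: assumes "i < n" shows "is_Cl (stat D) (eff D (a i) (s i) \<union> (s i \<inter> s (Suc i))) (s (Suc i))"
  using phi[OF assms] unfolding Phi_def by (auto split: if_splits)

lemma occf_ex: "occf D s a n t = Some b \<Longrightarrow> t \<le> n \<and> executable_in D b (s t)"
  unfolding occf_def using phi_ex by (auto split: if_splits intro: someI)

lemma occf_some: "t \<le> n \<Longrightarrow> executable_in D b (s t) \<Longrightarrow> \<exists>c. occf D s a n t = Some c"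
  unfolding occf_def by auto

lemma sM: "i \<le> n \<Longrightarrow> s_of (Mof D s a n) i = s i"
  unfolding s_of_def by auto

lemma M_closed: "rules_closed (reduct (prog_Pi D \<Gamma> \<Delta> n) (Mof D s a n)) (Mof D s a n)"
  unfolding rules_closed_def
proof (intro allI impI)
  fix h B assume "(Some h, B) \<in> reduct (prog_Pi D \<Gamma> \<Delta> n) (Mof D s a n) \<and> B \<subseteq> Mof D s a n"
  then obtain N where h: "(Some h, B, N) \<in> prog_Pi D \<Gamma> \<Delta> n" "N \<inter> Mof D s a n = {}" "B \<subseteq> Mof D s a n"
    unfolding reduct_def by blast
  from h(1) show "h \<in> Mof D s a n"
  proof (cases rule: Pi_cases)
    case (init l) then show ?thesis using s0 by simp
  next
    case (poss b P t) then show ?thesis using h(3) by (auto simp: executable_in_def)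
  next
    case (dyn b f P t)
    then have "occf D s a n t = Some b" "P \<subseteq> s t" using h(3) by auto
    then have "b = a t" using dyn unfolding occf_def by simp
    then have "f \<in> eff D (a t) (s t)" using dyn \<open>P \<subseteq> s t\<close> unfolding eff_def by blast
    then show ?thesis using phi_cl[of t] dyn unfolding is_Cl_def by auto
  next
    case (stat P f t)
    then have "P \<subseteq> s t" using h(3) by (cases "P = {}") auto
    then show ?thesis using stat stt[of t] unfolding is_state_def closed_under_def by auto
  next
    case (occ b t)
    then have "executable_in D b (s t)" "\<not> (\<exists>c. occf D s a n t = Some c \<and> c \<noteq> b)"
      using h(2,3) by auto
    then show ?thesis using occf_some[of t b] occ by auto
  next
    case (nocc b c t) then show ?thesis using h(3) by auto
  next
    case (inert l t)
    then have "comp l \<notin> s (Suc t)" "l \<in> s t" using h(2,3) by auto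
    then have "l \<in> s (Suc t)" using interp_comp[of "s (Suc t)" "comp l"] stt[of "Suc t"] inert
      unfolding is_state_def by auto
    then show ?thesis using inert by simp
  next
    case goal then show ?thesis by simp
  qed
qed

lemma M_constr: "(None, B) \<in> reduct (prog_Pi D \<Gamma> \<Delta> n) (Mof D s a n) \<Longrightarrow> \<not> B \<subseteq> Mof D s a n"
proof
  assume "(None, B) \<in> reduct (prog_Pi D \<Gamma> \<Delta> n) (Mof D s a n)" "B \<subseteq> Mof D s a n"
  then obtain N where h: "(None, B, N) \<in> prog_Pi D \<Gamma> \<Delta> n" "N \<inter> Mof D s a n = {}" "B \<subseteq> Mof D s a n"
    unfolding reduct_def by blast
  from Pi_cases_None[OF h(1)] show False
  proof
    assume "\<exists>f t. B = {Holds (Pos f) t, Holds (Neg f) t} \<and> t \<le> n"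
    then obtain f t where "B = {Holds (Pos f) t, Holds (Neg f) t}" "t \<le> n" by blast
    then have "Pos f \<in> s t" "Neg f \<in> s t" using h(3) by auto
    then show False using stt[of t] \<open>t \<le> n\<close> unfolding is_state_def is_interpretation_def consistent_lits_def by blast
  next
    assume "B = {} \<and> N = {Goal}" then show False using h(2) by simp
  qed
qed

lemma M_min: assumes X: "rules_closed (reduct (prog_Pi D \<Gamma> \<Delta> n) (Mof D s a n)) X"
  shows "Mof D s a n \<subseteq> X"
proof -
  let ?M = "Mof D s a n"
  have fire: "h \<in> X" if "(Some h, B, N) \<in> prog_Pi D \<Gamma> \<Delta> n" "N \<inter> ?M = {}" "B \<subseteq> X" for h B N
    using X that unfolding rules_closed_def reduct_def by blast
  have pos: "Possible b t \<in> X" if pa: "t \<le> n" "executable_in D b (s t)" "\<forall>l\<in>s t. Holds l t \<in> X" for b t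
  proof -
    obtain P where "(b,P) \<in> exe D" "P \<subseteq> s t" using pa(2) unfolding executable_in_def by blast
    then show ?thesis using fire[OF Pi_poss[where a=b and P=P and t=t]] pa unfolding holds_at_def by auto
  qed
  have oc: "Occ b t \<in> X" if "occf D s a n t = Some b" "\<forall>l\<in>s t. Holds l t \<in> X" for b t
  proof -
    have "t \<le> n" "executable_in D b (s t)" using occf_ex[OF that(1)] by auto
    then have "Possible b t \<in> X" using pos that by blast
    moreover have "{Nocc b t} \<inter> ?M = {}" using that(1) by simp
    ultimately show ?thesis using fire[OF Pi_occ[where a=b and t=t]] \<open>t \<le> n\<close> by auto
  qed
  have hold: "\<forall>l\<in>s t. Holds l t \<in> X" if "t \<le> n" for t
    using that
  proof (induction t)
    case 0
    then show ?case using fire[OF Pi_init] s0 by auto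
  next
    case (Suc t)
    then have IH: "\<forall>l\<in>s t. Holds l t \<in> X" and tn: "t < n" by auto
    let ?w = "s (Suc t) \<inter> {l. Holds l (Suc t) \<in> X}"
    have occa: "Occ (a t) t \<in> X" using oc[OF _ IH] tn unfolding occf_def by simp
    have posa: "Possible (a t) t \<in> X" using pos[OF _ phi_ex[OF tn] IH] tn by simp
    have "s (Suc t) \<subseteq> ?w"
    proof -
      have cl: "is_Cl (stat D) (eff D (a t) (s t) \<union> (s t \<inter> s (Suc t))) (s (Suc t))" using phi_cl[OF tn] .
      have st': "is_state D (s (Suc t))" using stt Suc.prems by blast
      have 1: "eff D (a t) (s t) \<subseteq> ?w"
      proof
        fix f assume f: "f \<in> eff D (a t) (s t)"
        then obtain P where P: "(a t, f, P) \<in> dyn D" "P \<subseteq> s t" unfolding eff_def by blast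
        have "Holds f (Suc t) \<in> X"
          using fire[OF Pi_dyn[where a="a t" and f=f and P=P and t=t]] P tn occa posa IH
          unfolding holds_at_def by auto
        then show "f \<in> ?w" using f cl unfolding is_Cl_def by auto
      qed
      have 2: "s t \<inter> s (Suc t) \<subseteq> ?w"
      proof
        fix l assume l: "l \<in> s t \<inter> s (Suc t)"
        then have "comp l \<notin> s (Suc t)" using cons_comp st' unfolding is_state_def is_interpretation_def by blast
        then have "{Holds (comp l) (Suc t)} \<inter> ?M = {}" by simp
        then have "Holds l (Suc t) \<in> X" using fire[OF Pi_inert[where l=l and t=t]] tn IH l by auto
        then show "l \<in> ?w" using l by auto
      qed
      have 3: "closed_under (stat D) ?w"
        unfolding closed_under_def
      proof (intro conjI)
        show "consistent_lits ?w" using st' unfolding is_state_def is_interpretation_def consistent_lits_def by blast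
        show "\<forall>(P, f)\<in>stat D. P \<subseteq> ?w \<longrightarrow> f \<in> ?w"
        proof (intro ballI impI, clarify)
          fix P f assume "(P, f) \<in> stat D" "P \<subseteq> ?w"
          then have "f \<in> s (Suc t)" using st' unfolding is_state_def closed_under_def by blast
          moreover have "Holds f (Suc t) \<in> X"
            using fire[OF Pi_stat[where P=P and f=f and t="Suc t"]] \<open>(P, f) \<in> stat D\<close> \<open>P \<subseteq> ?w\<close> Suc.prems
            unfolding holds_at_def by auto
          ultimately show "f \<in> ?w" by simp
        qed
      qed
      show ?thesis using cl 1 2 3 unfolding is_Cl_def by blast
    qed
    then show ?case by blast
  qed
  show ?thesis
  proof
    fix x assume x: "x \<in> ?M"
    show "x \<in> X"
    proof (cases x)
      case (Holds l t) then show ?thesis using x hold by auto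
    next
      case (Possible b t) then show ?thesis using x hold pos by auto
    next
      case (Occ b t) then show ?thesis using x hold oc occf_ex by auto
    next
      case (Nocc b t)
      then obtain c where c: "occf D s a n t = Some c" "c \<noteq> b" using x by auto
      then have "Occ c t \<in> X" using oc hold occf_ex by blast
      then show ?thesis using fire[OF Pi_nocc[where a=b and b=c and t=t]] c occf_ex Nocc by auto
    next
      case Goal
      then show ?thesis using fire[OF Pi_goal] gl hold[of n] unfolding holds_at_def by auto
    qed
  qed
qed

lemma part1: "\<exists>M. answer_set (prog_Pi D \<Gamma> \<Delta> n) M \<and> (\<forall>i<n. Occ (a i) i \<in> M)
                 \<and> (\<forall>i\<le>n. s i = s_of M i)"
proof (intro exI conjI allI impI)
  show "answer_set (prog_Pi D \<Gamma> \<Delta> n) (Mof D s a n)"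
    unfolding answer_set_def using M_closed M_min M_constr by blast
  show "Occ (a i) i \<in> Mof D s a n" if "i < n" for i using that by (simp add: occf_def)
  show "s i = s_of (Mof D s a n) i" if "i \<le> n" for i using sM that by simp
qed

end

theorem theorem1:
  fixes D :: "('f::finite, 'a::finite) domain"
    and \<Gamma> \<Delta> :: "'f lit set"
    and n :: nat
  assumes "finite_domain D"
    and "consistent_theory D \<Gamma>"
  shows "(\<forall>s a. trajectory D s a n \<and> s 0 = \<Gamma> \<and> \<Delta> \<subseteq> s n \<longrightarrow>
            (\<exists>M. answer_set (prog_Pi D \<Gamma> \<Delta> n) M \<and> (\<forall>i<n. Occ (a i) i \<in> M)
                 \<and> (\<forall>i\<le>n. s i = s_of M i)))
       \<and> (\<forall>M. answer_set (prog_Pi D \<Gamma> \<Delta> n) M \<longrightarrow>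
            (\<exists>k\<le>n. \<exists>a. (\<forall>i<k. Occ (a i) i \<in> M)
                 \<and> trajectory D (s_of M) a k \<and> \<Delta> \<subseteq> s_of M k
                 \<and> (k < n \<longrightarrow> (\<forall>b. \<not> executable_in D b (s_of M k)))))"
proof (intro conjI allI impI)
  fix s a assume "trajectory D s a n \<and> s 0 = \<Gamma> \<and> \<Delta> \<subseteq> s n"
  then show "\<exists>M. answer_set (prog_Pi D \<Gamma> \<Delta> n) M \<and> (\<forall>i<n. Occ (a i) i \<in> M)
                 \<and> (\<forall>i\<le>n. s i = s_of M i)" using part1 by blast
next
  fix M assume "answer_set (prog_Pi D \<Gamma> \<Delta> n) M"
  moreover have "is_state D \<Gamma>" using assms(2) unfolding consistent_theory_def by blast
  ultimately show "\<exists>k\<le>n. \<exists>a. (\<forall>i<k. Occ (a i) i \<in> M)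
                 \<and> trajectory D (s_of M) a k \<and> \<Delta> \<subseteq> s_of M k
                 \<and> (k < n \<longrightarrow> (\<forall>b. \<not> executable_in D b (s_of M k)))" using part2 by blast
qed

end
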